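(* Let $\mathcal{N}$ be a power network description as in the context, with private line conductances $\mathbf{g}=(g_{ij})_{(i,j)\in E}\in\mathbb{R}^n$ and susceptances $\mathbf{b}=(b_{ij})_{(i,j)\in E}\in\mathbb{R}^n$. Fix $\alpha>0$, $\epsilon>0$, $\beta>0$ and $\lambda>0$. Then the Power Lines Obfuscation (PLO) mechanism described in the context, viewed as a randomized algorithm that maps the private line-parameter data to the released network description $\dot{\mathcal{N}}$, is $\epsilon$-differentially private with respect to the $\alpha$-indistinguishability adjacency relation.
   Context: Network data: a set of buses $N$ ($|N|=m$), a set $E$ of $n$ directed lines (transmission lines and transformers) and the set $E^R$ of the same lines with reversed direction; each line has admittance $Y_{ij}=g_{ij}+\mathbf{i}\,b_{ij}$ (conductance $g_{ij}$, susceptance $b_{ij}$). The remaining network data (bus demands $S^d_i$, generator bounds $S^{gl}_i,S^{gu}_i$, voltage bounds $v^l_i,v^u_i$, phase-angle-difference limits $\theta^\Delta_{ij}$, thermal limits $s^u_{ij}$, generation cost coefficients $c_{0i},c_{1i},c_{2i}$, a slack bus $s$), the optimal AC-OPF dispatch cost $O^*>0$ of $\mathcal{N}$, the vector of conductance/susceptance ratios $\mathbf{r}=(r_{ij})_{(i,j)\in E}$, and the partition of lines by voltage level ($E(v)$ = lines at voltage level $v\in VL(\mathcal{N})$, $n_v=|E(v)|$, each line in exactly one $E(v)$) are public. Write $\mathrm{cost}(S^g_i)=c_{2i}(\Re S^g_i)^2+c_{1i}\Re S^g_i+c_{0i}$. Laplace distribution: $\mathrm{Lap}(\lambda')$ has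 density $\frac{1}{2\lambda'}e^{-|x|/\lambda'}$; $\mathrm{Lap}(\lambda')^n$ denotes $n$ i.i.d. draws. Differential privacy: two private datasets $D,D'$ (here the line-parameter vectors) are $\alpha$-adjacent, $D\sim_\alpha D'$, if there is a single coordinate $i$ with $|D_i-D'_i|\le\alpha$ and $D_j=D'_j$ for all $j\neq i$. A randomized algorithm $\mathcal{A}$ is $\epsilon$-differentially private if for all $D\sim_\alpha D'$ and all measurable output sets $O$, $\Pr[\mathcal{A}(D)\in O]\le e^{\epsilon}\Pr[\mathcal{A}(D')\in O]$. PLO mechanism (input $\mathcal{N},O^*,\epsilon,\alpha,\beta$; all noise draws independent): 1. $\tilde{\mathbf{g}}=\mathbf{g}+z$, $z\sim\mathrm{Lap}(3\alpha/\epsilon)^n$. 2. $\tilde b_{ij}=r_{ij}\tilde g_{ij}$ for each line. 3. For each voltage level $v$: $\tilde\mu^v_{\mathbf g}=\frac{1}{n_v}\sum_{(i,j)\in E(v)}g_{ij}+\mathrm{Lap}(3\alpha/(n_v\epsilon))$ and $\tilde\mu^v_{\mathbf b}=\frac{1}{n_v}\sum_{(i,j)\in E(v)}b_{ij}+\mathrm{Lap}(3\alpha/(n_v\epsilon))$. 4. Solve (selecting a solution by any fixed rule) the problem with variables $S^g_i,V_i$ ($i\in N$), $\dot Y_{ij}=\dot g_{ij}+\mathbf{i}\dot b_{ij}$ and $S_{ij}$ ($(i,j)\in E\cup E^R$): minimize $\|\dot{\mathbf g}-\tilde{\mathbf g}\|_2^2+\|\dot{\mathbf b}-\tilde{\mathbf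 b}\|_2^2$ subject to $\angle V_s=0$; $v^l_i\le|V_i|\le v^u_i$; $-\theta^\Delta_{ij}\le\angle(V_iV_j^* )\le\theta^\Delta_{ij}$ for $(i,j)\in E$; $S^{gl}_i\le S^g_i\le S^{gu}_i$; $|S_{ij}|\le s^u_{ij}$; $S^g_i-S^d_i=\sum_{(i,j)\in E\cup E^R}S_{ij}$; $\frac{|\sum_{i\in N}\mathrm{cost}(S^g_i)-O^*|}{O^*}\le\beta$; $S_{ij}=\dot Y^*_{ij}|V_i|^2-\dot Y^*_{ij}V_iV_j^*$; and for each $v$ and each line in $E(v)\cup E^R(v)$: $\tilde\mu^v_{\mathbf g}/\lambda\le\dot g_{ij}\le\lambda\tilde\mu^v_{\mathbf g}$, $\tilde\mu^v_{\mathbf b}/\lambda\le\dot b_{ij}\le\lambda\tilde\mu^v_{\mathbf b}$. Output: $\dot{\mathcal{N}}$, identical to $\mathcal{N}$ except that the admittances are replaced by $\dot Y$. *)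

theory Defs
  imports "HOL-Probability.Probability"
begin

text \<open>Public part of a power network description. Lines are directed pairs of buses;
  the private conductances g and susceptances b are passed separately.\<close>

record ('bus, 'v) pnet =
  buses  :: "'bus set"
  lines  :: "('bus \<times> 'bus) set"
  Sd     :: "'bus \<Rightarrow> complex"
  Sgl    :: "'bus \<Rightarrow> complex"
  Sgu    :: "'bus \<Rightarrow> complex"
  vl     :: "'bus \<Rightarrow> real"
  vu     :: "'bus \<Rightarrow> real"
  thetaD :: "'bus \<times> 'bus \<Rightarrow> real"
  su     :: "'bus \<times> 'bus \<Rightarrow> real"
  c0     :: "'bus \<Rightarrow> real"
  c1     :: "'bus \<Rightarrow> real"
  c2     :: "'bus \<Rightarrow> real"
  slack  :: "'bus"
  ratio  :: "'bus \<times> 'bus \<Rightarrow> real"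
  vlevel :: "'bus \<times> 'bus \<Rightarrow> 'v"

definition rlines :: "('bus, 'v) pnet \<Rightarrow> ('bus \<times> 'bus) set" where
  "rlines N = prod.swap ` lines N"

definition alines :: "('bus, 'v) pnet \<Rightarrow> ('bus \<times> 'bus) set" where
  "alines N = lines N \<union> rlines N"

definition VL :: "('bus, 'v) pnet \<Rightarrow> 'v set" where
  "VL N = vlevel N ` lines N"

definition Ev :: "('bus, 'v) pnet \<Rightarrow> 'v \<Rightarrow> ('bus \<times> 'bus) set" where
  "Ev N v = {l \<in> lines N. vlevel N l = v}"

definition nv :: "('bus, 'v) pnet \<Rightarrow> 'v \<Rightarrow> nat" where
  "nv N v = card (Ev N v)"

definition lvl :: "('bus, 'v) pnet \<Rightarrow> 'bus \<times> 'bus \<Rightarrow> 'v" where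
  "lvl N l = (if l \<in> lines N then vlevel N l else vlevel N (prod.swap l))"

definition lvmean :: "('bus, 'v) pnet \<Rightarrow> ('bus \<times> 'bus \<Rightarrow> real) \<Rightarrow> 'v \<Rightarrow> real" where
  "lvmean N x v = (\<Sum>l\<in>Ev N v. x l) / real (nv N v)"

definition gen_cost :: "('bus, 'v) pnet \<Rightarrow> ('bus \<Rightarrow> complex) \<Rightarrow> 'bus \<Rightarrow> real" where
  "gen_cost N Sg i = c2 N i * (Re (Sg i))\<^sup>2 + c1 N i * Re (Sg i) + c0 N i"

definition lap_density :: "real \<Rightarrow> real \<Rightarrow> real" where
  "lap_density l x = exp (- \<bar>x\<bar> / l) / (2 * l)"

definition laplace :: "real \<Rightarrow> real measure" where
  "laplace l = density lborel (\<lambda>x. ennreal (lap_density l x))"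

text \<open>Feasible set of the optimization problem of step 4 (complex bounds componentwise).\<close>
definition plo_feasible ::
  "('bus, 'v) pnet \<Rightarrow> real \<Rightarrow> real \<Rightarrow> real \<Rightarrow> ('v \<Rightarrow> real) \<Rightarrow> ('v \<Rightarrow> real) \<Rightarrow>
   ('bus \<Rightarrow> complex) \<Rightarrow> ('bus \<Rightarrow> complex) \<Rightarrow> ('bus \<times> 'bus \<Rightarrow> complex) \<Rightarrow> ('bus \<times> 'bus \<Rightarrow> complex) \<Rightarrow> bool"
where
  "plo_feasible N Ostar beta lam mug mub Sg V Yd S \<longleftrightarrow>
     Arg (V (slack N)) = 0
   \<and> (\<forall>i\<in>buses N. vl N i \<le> cmod (V i) \<and> cmod (V i) \<le> vu N i)
   \<and> (\<forall>(i,j)\<in>lines N. - thetaD N (i,j) \<le> Arg (V i * cnj (V j)) \<and> Arg (V i * cnj (V j)) \<le> thetaD N (i,j))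
   \<and> (\<forall>i\<in>buses N. Re (Sgl N i) \<le> Re (Sg i) \<and> Re (Sg i) \<le> Re (Sgu N i)
                 \<and> Im (Sgl N i) \<le> Im (Sg i) \<and> Im (Sg i) \<le> Im (Sgu N i))
   \<and> (\<forall>l\<in>alines N. cmod (S l) \<le> su N l)
   \<and> (\<forall>i\<in>buses N. Sg i - Sd N i = (\<Sum>l\<in>{l\<in>alines N. fst l = i}. S l))
   \<and> \<bar>(\<Sum>i\<in>buses N. gen_cost N Sg i) - Ostar\<bar> / Ostar \<le> beta
   \<and> (\<forall>(i,j)\<in>alines N. S (i,j) = cnj (Yd (i,j)) * complex_of_real ((cmod (V i))\<^sup>2)
                                  - cnj (Yd (i,j)) * V i * cnj (V j))
   \<and> (\<forall>l\<in>alines N. mug (lvl N l) / lam \<le> Re (Yd l) \<and> Re (Yd l) \<le> lam * mug (lvl N l)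
                  \<and> mub (lvl N l) / lam \<le> Im (Yd l) \<and> Im (Yd l) \<le> lam * mub (lvl N l))"

definition plo_obj :: "('bus, 'v) pnet \<Rightarrow> ('bus \<times> 'bus \<Rightarrow> real) \<Rightarrow> ('bus \<times> 'bus \<Rightarrow> complex) \<Rightarrow> real" where
  "plo_obj N gt Yd = (\<Sum>l\<in>lines N. (Re (Yd l) - gt l)\<^sup>2 + (Im (Yd l) - ratio N l * gt l)\<^sup>2)"

definition plo_optimal where
  "plo_optimal N Ostar beta lam gt mug mub Sg V Yd S \<longleftrightarrow>
     plo_feasible N Ostar beta lam mug mub Sg V Yd S
   \<and> (\<forall>Sg' V' Yd' S'. plo_feasible N Ostar beta lam mug mub Sg' V' Yd' S' \<longrightarrow>
        plo_obj N gt Yd \<le> plo_obj N gt Yd')"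

text \<open>A fixed selection rule: whenever the step-4 problem has an optimal solution,
  it returns the admittances of one of them.\<close>
definition valid_selector ::
  "('bus, 'v) pnet \<Rightarrow> real \<Rightarrow> real \<Rightarrow> real \<Rightarrow>
   (('bus \<times> 'bus \<Rightarrow> real) \<times> ('v \<Rightarrow> real) \<times> ('v \<Rightarrow> real) \<Rightarrow> ('bus \<times> 'bus \<Rightarrow> complex)) \<Rightarrow> bool" where
  "valid_selector N Ostar beta lam sel \<longleftrightarrow>
     (\<forall>gt mug mub. (\<exists>Sg V Yd S. plo_optimal N Ostar beta lam gt mug mub Sg V Yd S) \<longrightarrow>
        (\<exists>Sg V S. plo_optimal N Ostar beta lam gt mug mub Sg V (sel (gt, mug, mub)) S))"

definition plo_input_space :: "('bus, 'v) pnet \<Rightarrow> (('bus \<times> 'bus \<Rightarrow> real) \<times> ('v \<Rightarrow> real) \<times> ('v \<Rightarrow> real)) measure" where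
  "plo_input_space N = PiM (lines N) (\<lambda>_. borel) \<Otimes>\<^sub>M (PiM (VL N) (\<lambda>_. borel) \<Otimes>\<^sub>M PiM (VL N) (\<lambda>_. borel))"

definition plo_noise :: "('bus, 'v) pnet \<Rightarrow> real \<Rightarrow> real \<Rightarrow> (('bus \<times> 'bus \<Rightarrow> real) \<times> ('v \<Rightarrow> real) \<times> ('v \<Rightarrow> real)) measure" where
  "plo_noise N alpha eps =
     PiM (lines N) (\<lambda>_. laplace (3 * alpha / eps)) \<Otimes>\<^sub>M
     (PiM (VL N) (\<lambda>v. laplace (3 * alpha / (real (nv N v) * eps))) \<Otimes>\<^sub>M
      PiM (VL N) (\<lambda>v. laplace (3 * alpha / (real (nv N v) * eps))))"

text \<open>Output distribution of PLO on private data (g, b); the released network is the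
  public data of N together with the admittances returned by the selector.\<close>
definition plo_mech where
  "plo_mech N Ostar alpha eps beta lam sel Mout g b =
     distr (plo_noise N alpha eps) Mout
       (\<lambda>(z, wg, wb). sel (restrict (\<lambda>l. g l + z l) (lines N),
                            restrict (\<lambda>v. lvmean N g v + wg v) (VL N),
                            restrict (\<lambda>v. lvmean N b v + wb v) (VL N)))"

definition alpha_adj :: "('bus, 'v) pnet \<Rightarrow> real \<Rightarrow>
    ('bus \<times> 'bus \<Rightarrow> real) \<times> ('bus \<times> 'bus \<Rightarrow> real) \<Rightarrow>
    ('bus \<times> 'bus \<Rightarrow> real) \<times> ('bus \<times> 'bus \<Rightarrow> real) \<Rightarrow> bool" where
  "alpha_adj N alpha D D' \<longleftrightarrow>
     (\<exists>l\<in>lines N. \<bar>fst D l - fst D' l\<bar> \<le> alpha \<and> \<bar>snd D l - snd D' l\<bar> \<le> alpha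
        \<and> (\<forall>l'\<in>lines N - {l}. fst D l' = fst D' l' \<and> snd D l' = snd D' l'))"

definition differentially_private :: "('d \<Rightarrow> 'o measure) \<Rightarrow> ('d \<Rightarrow> 'd \<Rightarrow> bool) \<Rightarrow> real \<Rightarrow> bool" where
  "differentially_private M adj eps \<longleftrightarrow>
     (\<forall>D D' A. adj D D' \<longrightarrow> A \<in> sets (M D) \<longrightarrow> measure (M D) A \<le> exp eps * measure (M D') A)"

end

theory Submission
  imports Defs
begin

lemma lap_density_nonneg: "0 < s \<Longrightarrow> 0 \<le> lap_density s x"
  by (simp add: lap_density_def)

lemma borel_lap_density[measurable]: "(\<lambda>x. lap_density s x) \<in> borel_measurable borel"
  unfolding lap_density_def by measurable

lemma sets_laplace[measurable_cong, simp]: "sets (laplace s) = sets borel"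
  by (simp add: laplace_def)

lemma space_laplace[simp]: "space (laplace s) = UNIV"
  by (simp add: laplace_def)

lemma laplace_prob:
  assumes "0 < s" shows "prob_space (laplace s)"
proof -
  let ?e = "exponential_density (1/s)"
  have ps: "prob_space (density lborel ?e)" using assms by (intro prob_space_exponential_density) simp
  have e1: "(\<integral>\<^sup>+x. ennreal (?e x) \<partial>lborel) = 1"
    using prob_space.emeasure_space_1[OF ps] by (simp add: emeasure_density)
  have e2: "(\<integral>\<^sup>+x. ennreal (?e (- x)) \<partial>lborel) = 1"
  proof -
    have "(\<integral>\<^sup>+x. ennreal (?e (- x)) \<partial>lborel) = (\<integral>\<^sup>+x. ennreal (?e x) \<partial>distr lborel borel uminus)"
      by (subst nn_integral_distr) (auto)
    also have "\<dots> = 1" using e1 by (simp add: lborel_distr_uminus)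
    finally show ?thesis .
  qed
  have ae: "AE x in lborel. ennreal (lap_density s x) = ennreal (?e x / 2) + ennreal (?e (- x) / 2)"
  proof -
    have "AE x in lborel. x \<noteq> 0" by (simp add: AE_lborel_singleton)
    then show ?thesis
    proof (rule AE_mp, intro AE_I2 impI)
      fix x :: real assume "x \<noteq> 0"
      then have "lap_density s x = ?e x / 2 + ?e (- x) / 2"
        using assms by (auto simp: lap_density_def exponential_density_def field_simps abs_if)
      moreover have "0 \<le> ?e x / 2" "0 \<le> ?e (- x) / 2" using assms
        by (auto simp: exponential_density_def)
      ultimately show "ennreal (lap_density s x) = ennreal (?e x / 2) + ennreal (?e (- x) / 2)"
        by (simp add: ennreal_plus)
    qed
  qed
  have "(\<integral>\<^sup>+x. ennreal (lap_density s x) \<partial>lborel) =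
        (\<integral>\<^sup>+x. ennreal (?e x / 2) + ennreal (?e (- x) / 2) \<partial>lborel)"
    by (rule nn_integral_cong_AE[OF ae])
  also have "\<dots> = (\<integral>\<^sup>+x. ennreal (?e x / 2) \<partial>lborel) + (\<integral>\<^sup>+x. ennreal (?e (- x) / 2) \<partial>lborel)"
    by (rule nn_integral_add) auto
  also have "\<dots> = ennreal (1/2) * (\<integral>\<^sup>+x. ennreal (?e x) \<partial>lborel) + ennreal (1/2) * (\<integral>\<^sup>+x. ennreal (?e (- x)) \<partial>lborel)"
  proof -
    have h: "ennreal (r / 2) = ennreal (1/2) * ennreal r" if "0 \<le> r" for r :: real
    proof -
      have "ennreal (r / 2) = ennreal (1/2 * r)" by (rule arg_cong[where f=ennreal]) simp
      also have "\<dots> = ennreal (1/2) * ennreal r" by (rule ennreal_mult) (use that in auto)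
      finally show ?thesis .
    qed
    have nn: "0 \<le> ?e y" for y using assms by (simp add: exponential_density_def)
    show ?thesis
      by (simp only: h[OF nn]) (intro arg_cong2[where f="(+)"] nn_integral_cmult; measurable)
  qed
  also have "\<dots> = 1"
  proof -
    have "ennreal (1/2) + ennreal (1/2) = ennreal (1/2 + 1/2)" by (rule ennreal_plus[symmetric]) auto
    then show ?thesis using e1 e2 by simp
  qed
  finally have "(\<integral>\<^sup>+x. ennreal (lap_density s x) \<partial>lborel) = 1" .
  then show ?thesis unfolding laplace_def
    by (intro prob_spaceI) (simp add: emeasure_density)
qed

lemma laplace_finite: "finite_measure (laplace s)"
proof (cases "0 < s")
  case True then show ?thesis using laplace_prob prob_space.finite_measure by blast
next
  case False
  then have "\<And>x. lap_density s x \<le> 0" by (auto simp: lap_density_def intro: divide_nonneg_nonpos)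
  then have "laplace s = density lborel (\<lambda>_. 0)" unfolding laplace_def
    by (intro density_cong) (auto simp: ennreal_eq_0_iff)
  then show ?thesis by (auto intro!: finite_measureI simp: emeasure_density)
qed

lemma PiM_shift:
  fixes M :: "'i \<Rightarrow> real measure"
  assumes I: "finite I" and sM: "\<And>i. sets (M i) = sets borel" and fM: "\<And>i. finite_measure (M i)"
  shows "distr (PiM I M) (PiM I (\<lambda>_. borel)) (\<lambda>z. restrict (\<lambda>i. c i + z i) I)
         = PiM I (\<lambda>i. distr (M i) borel ((+) (c i)))"
proof -
  have spM: "space (M i) = UNIV" for i using sets_eq_imp_space_eq[OF sM[of i]] by simp
  interpret P: product_sigma_finite M
    unfolding product_sigma_finite_def using fM finite_measure.sigma_finite_measure by blast
  interpret Q: product_sigma_finite "\<lambda>i. distr (M i) borel ((+) (c i))"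
    unfolding product_sigma_finite_def
  proof (intro allI finite_measure.sigma_finite_measure finite_measure.finite_measure_distr[OF fM])
    show "(+) (c i) \<in> measurable (M i) borel" for i by (simp add: measurable_cong_sets[OF sM refl])
  qed
  have meas: "(\<lambda>z. restrict (\<lambda>i. c i + z i) I) \<in> measurable (PiM I M) (PiM I (\<lambda>_. borel))"
  proof (rule measurable_restrict)
    fix i assume "i \<in> I"
    show "(\<lambda>x. c i + x i) \<in> borel_measurable (PiM I M)"
      by (rule measurable_compose[OF measurable_component_singleton[OF \<open>i \<in> I\<close>]])
         (simp add: measurable_cong_sets[OF sM refl])
  qed
  show ?thesis
  proof (rule Q.PiM_eqI[OF I])
    show "sets (distr (PiM I M) (PiM I (\<lambda>_. borel)) (\<lambda>z. restrict (\<lambda>i. c i + z i) I))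
          = sets (PiM I (\<lambda>i. distr (M i) borel ((+) (c i))))"
      by (simp only: sets_distr) (rule sets_PiM_cong; simp)
  next
    fix A assume A: "\<And>i. i \<in> I \<Longrightarrow> A i \<in> sets (distr (M i) borel ((+) (c i)))"
    have pre: "(\<lambda>z. restrict (\<lambda>i. c i + z i) I) -` Pi\<^sub>E I A \<inter> space (PiM I M)
             = Pi\<^sub>E I (\<lambda>i. (+) (c i) -` A i)"
      unfolding space_PiM spM by (auto simp: PiE_def Pi_def)
    have Ai: "(+) (c i) -` A i \<in> sets (M i)" if "i \<in> I" for i
    proof -
      have "A i \<in> sets borel" using A that by simp
      then have "(+) (c i) -` A i \<inter> space borel \<in> sets borel"
        by (rule measurable_sets[rotated]) simp
      then show ?thesis by (simp add: sM)
    qed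
    have "emeasure (distr (PiM I M) (PiM I (\<lambda>_. borel)) (\<lambda>z. restrict (\<lambda>i. c i + z i) I)) (Pi\<^sub>E I A)
        = emeasure (PiM I M) (Pi\<^sub>E I (\<lambda>i. (+) (c i) -` A i))"
    proof -
      have "Pi\<^sub>E I A \<in> sets (PiM I (\<lambda>_. borel))" using A by (intro sets_PiM_I_finite I) simp
      then show ?thesis by (simp add: emeasure_distr[OF meas] pre)
    qed
    also have "\<dots> = (\<Prod>i\<in>I. emeasure (M i) ((+) (c i) -` A i))"
      using Ai by (rule P.emeasure_PiM[OF I])
    also have "\<dots> = (\<Prod>i\<in>I. emeasure (distr (M i) borel ((+) (c i))) (A i))"
    proof (intro prod.cong refl)
      fix i assume "i \<in> I"
      then have "A i \<in> sets borel" using A by simp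
      then show "emeasure (M i) ((+) (c i) -` A i) = emeasure (distr (M i) borel ((+) (c i))) (A i)"
        by (subst emeasure_distr) (simp_all add: measurable_cong_sets[OF sM refl] spM)
    qed
    finally show "emeasure (distr (PiM I M) (PiM I (\<lambda>_. borel)) (\<lambda>z. restrict (\<lambda>i. c i + z i) I)) (Pi\<^sub>E I A)
        = (\<Prod>i\<in>I. emeasure (distr (M i) borel ((+) (c i))) (A i))" .
  qed
qed

lemma laplace_shift:
  "distr (laplace s) borel ((+) c) = density lborel (\<lambda>x. ennreal (lap_density s (x - c)))"
proof -
  have "density lborel (\<lambda>x. ennreal (lap_density s (x - c)))
      = density (distr lborel borel ((+) c)) (\<lambda>x. ennreal (lap_density s (x - c)))"
    by (simp add: lborel_distr_plus)
  also have "\<dots> = distr (density lborel (\<lambda>x. ennreal (lap_density s (c + x - c)))) borel ((+) c)"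
    by (rule density_distr) auto
  also have "\<dots> = distr (laplace s) borel ((+) c)" by (simp add: laplace_def)
  finally show ?thesis by simp
qed

lemma PiM_density:
  fixes f :: "'i \<Rightarrow> real \<Rightarrow> ennreal"
  assumes I: "finite I" and fm: "\<And>i. f i \<in> borel_measurable borel"
    and fin: "\<And>i. finite_measure (density lborel (f i))"
  shows "PiM I (\<lambda>i. density lborel (f i)) = density (PiM I (\<lambda>_. lborel)) (\<lambda>x. \<Prod>i\<in>I. f i (x i))"
proof -
  interpret L: product_sigma_finite "\<lambda>_. lborel :: real measure"
    unfolding product_sigma_finite_def by (simp add: sigma_finite_lborel)
  interpret Q: product_sigma_finite "\<lambda>i. density lborel (f i)"
    unfolding product_sigma_finite_def using fin finite_measure.sigma_finite_measure by blast
  show ?thesis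
  proof (rule Q.PiM_eqI[OF I, symmetric])
    show "sets (density (PiM I (\<lambda>_. lborel)) (\<lambda>x. \<Prod>i\<in>I. f i (x i))) = sets (PiM I (\<lambda>i. density lborel (f i)))"
      by (simp only: sets_density) (rule sets_PiM_cong; simp)
  next
    fix A assume A: "\<And>i. i \<in> I \<Longrightarrow> A i \<in> sets (density lborel (f i))"
    have mA: "Pi\<^sub>E I A \<in> sets (PiM I (\<lambda>_. lborel))"
      using A by (intro sets_PiM_I_finite I) auto
    have "emeasure (density (PiM I (\<lambda>_. lborel)) (\<lambda>x. \<Prod>i\<in>I. f i (x i))) (Pi\<^sub>E I A)
        = (\<integral>\<^sup>+x. (\<Prod>i\<in>I. f i (x i)) * indicator (Pi\<^sub>E I A) x \<partial>PiM I (\<lambda>_. lborel))"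
    proof -
      have fm'[measurable]: "f i \<in> borel_measurable lborel" for i using fm[of i] by simp
      have "(\<lambda>x. \<Prod>i\<in>I. f i (x i)) \<in> borel_measurable (PiM I (\<lambda>_. lborel))" by measurable
      then show ?thesis using mA by (subst emeasure_density) auto
    qed
    also have "\<dots> = (\<integral>\<^sup>+x. (\<Prod>i\<in>I. f i (x i) * indicator (A i) (x i)) \<partial>PiM I (\<lambda>_. lborel))"
    proof (rule nn_integral_cong)
      fix x assume "x \<in> space (PiM I (\<lambda>_. lborel :: real measure))"
      then have x: "x \<in> extensional I" by (simp add: space_PiM PiE_def)
      have "indicator (Pi\<^sub>E I A) x = (\<Prod>i\<in>I. indicator (A i) (x i) :: ennreal)"
      proof (cases "x \<in> Pi\<^sub>E I A")
        case True then show ?thesis by (auto simp: PiE_iff intro!: prod.neutral)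
      next
        case False
        with x obtain i where "i \<in> I" "x i \<notin> A i" by (auto simp: PiE_iff)
        then show ?thesis using False I by (auto intro!: prod_zero[symmetric] bexI[of _ i])
      qed
      then show "(\<Prod>i\<in>I. f i (x i)) * indicator (Pi\<^sub>E I A) x = (\<Prod>i\<in>I. f i (x i) * indicator (A i) (x i))"
        by (simp add: prod.distrib)
    qed
    also have "\<dots> = (\<Prod>i\<in>I. \<integral>\<^sup>+y. f i y * indicator (A i) y \<partial>lborel)"
      using A by (intro L.product_nn_integral_prod I) (auto intro!: borel_measurable_times_ennreal fm borel_measurable_indicator)
    also have "\<dots> = (\<Prod>i\<in>I. emeasure (density lborel (f i)) (A i))"
      using A by (intro prod.cong refl) (auto simp: emeasure_density fm)
    finally show "emeasure (density (PiM I (\<lambda>_. lborel)) (\<lambda>x. \<Prod>i\<in>I. f i (x i))) (Pi\<^sub>E I A)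
        = (\<Prod>i\<in>I. emeasure (density lborel (f i)) (A i))" .
  qed
qed

lemma meas_shift:
  fixes M :: "'i \<Rightarrow> real measure"
  assumes sM: "\<And>i. sets (M i) = sets borel"
  shows "(\<lambda>z. restrict (\<lambda>i. c i + z i) I) \<in> measurable (PiM I M) (PiM I (\<lambda>_. borel))"
proof (rule measurable_restrict)
  fix i assume "i \<in> I"
  show "(\<lambda>x. c i + x i) \<in> borel_measurable (PiM I M)"
    by (rule measurable_compose[OF measurable_component_singleton[OF \<open>i \<in> I\<close>]])
       (simp add: measurable_cong_sets[OF sM refl])
qed

lemma finite_lapd: "finite_measure (density lborel (\<lambda>x. ennreal (lap_density s (x - c))))"
proof -
  have "finite_measure (distr (laplace s) borel ((+) c))"
    by (rule finite_measure.finite_measure_distr[OF laplace_finite]) simp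
  then show ?thesis by (simp add: laplace_shift)
qed

lemma PiM_lap_shift:
  assumes I: "finite I"
  shows "distr (PiM I (\<lambda>i. laplace (s i))) (PiM I (\<lambda>_. borel)) (\<lambda>z. restrict (\<lambda>i. c i + z i) I)
       = density (PiM I (\<lambda>_. lborel)) (\<lambda>x. \<Prod>i\<in>I. ennreal (lap_density (s i) (x i - c i)))"
proof -
  have "distr (PiM I (\<lambda>i. laplace (s i))) (PiM I (\<lambda>_. borel)) (\<lambda>z. restrict (\<lambda>i. c i + z i) I)
      = PiM I (\<lambda>i. distr (laplace (s i)) borel ((+) (c i)))"
    by (rule PiM_shift[OF I]) (auto intro: laplace_finite)
  also have "\<dots> = PiM I (\<lambda>i. density lborel (\<lambda>x. ennreal (lap_density (s i) (x - c i))))"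
    by (simp only: laplace_shift)
  also have "\<dots> = density (PiM I (\<lambda>_. lborel)) (\<lambda>x. \<Prod>i\<in>I. ennreal (lap_density (s i) (x i - c i)))"
    by (rule PiM_density[OF I, where f="\<lambda>i x. ennreal (lap_density (s i) (x - c i))", simplified])
       (auto intro: finite_lapd)
  finally show ?thesis .
qed

lemma prob_PiM_lap:
  assumes "\<And>i. i \<in> I \<Longrightarrow> 0 < s i"
  shows "prob_space (PiM I (\<lambda>i. laplace (s i)))"
  by (rule prob_space_PiM) (use assms laplace_prob in auto)

lemma sigma_finite_PiM_lborel:
  assumes "finite I" shows "sigma_finite_measure (PiM I (\<lambda>_. lborel :: real measure))"
proof -
  interpret L: product_sigma_finite "\<lambda>_. lborel :: real measure"
    unfolding product_sigma_finite_def by (simp add: sigma_finite_lborel)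
  show ?thesis by (rule L.sigma_finite[OF assms])
qed

lemma noise_shift:
  fixes L :: "'a set" and V :: "'b set" and ca :: "'a \<Rightarrow> real" and cb cc sv :: "'b \<Rightarrow> real" and s :: real
  assumes L: "finite L" and V: "finite V" and s: "0 < s" and sv: "\<And>v. v \<in> V \<Longrightarrow> 0 < sv v"
  shows "distr (PiM L (\<lambda>_. laplace s) \<Otimes>\<^sub>M (PiM V (\<lambda>v. laplace (sv v)) \<Otimes>\<^sub>M PiM V (\<lambda>v. laplace (sv v))))
           (PiM L (\<lambda>_. borel) \<Otimes>\<^sub>M (PiM V (\<lambda>_. borel) \<Otimes>\<^sub>M PiM V (\<lambda>_. borel)))
           (\<lambda>(z, wg, wb). (restrict (\<lambda>l. ca l + z l) L, restrict (\<lambda>v. cb v + wg v) V, restrict (\<lambda>v. cc v + wb v) V))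
       = density (PiM L (\<lambda>_. lborel) \<Otimes>\<^sub>M (PiM V (\<lambda>_. lborel) \<Otimes>\<^sub>M PiM V (\<lambda>_. lborel)))
           (\<lambda>(x, y, w). (\<Prod>l\<in>L. ennreal (lap_density s (x l - ca l))) *
              ((\<Prod>v\<in>V. ennreal (lap_density (sv v) (y v - cb v))) * (\<Prod>v\<in>V. ennreal (lap_density (sv v) (w v - cc v)))))"
    (is "distr (?P1 \<Otimes>\<^sub>M (?P2 \<Otimes>\<^sub>M ?P3)) (?X1 \<Otimes>\<^sub>M (?X2 \<Otimes>\<^sub>M ?X3)) ?T = density (?B1 \<Otimes>\<^sub>M (?B2 \<Otimes>\<^sub>M ?B3)) ?H")
proof -
  let ?T1 = "\<lambda>z. restrict (\<lambda>l. ca l + z l) L"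
  let ?T2 = "\<lambda>z. restrict (\<lambda>v. cb v + z v) V"
  let ?T3 = "\<lambda>z. restrict (\<lambda>v. cc v + z v) V"
  let ?f1 = "\<lambda>x. \<Prod>l\<in>L. ennreal (lap_density s (x l - ca l))"
  let ?f2 = "\<lambda>x. \<Prod>v\<in>V. ennreal (lap_density (sv v) (x v - cb v))"
  let ?f3 = "\<lambda>x. \<Prod>v\<in>V. ennreal (lap_density (sv v) (x v - cc v))"
  have m1: "?T1 \<in> measurable ?P1 ?X1" by (rule meas_shift) simp
  have m2: "?T2 \<in> measurable ?P2 ?X2" by (rule meas_shift) simp
  have m3: "?T3 \<in> measurable ?P3 ?X3" by (rule meas_shift) simp
  have p1: "prob_space ?P1" using prob_PiM_lap[of L "\<lambda>_. s"] s by simp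
  have p2: "prob_space ?P2" using prob_PiM_lap[of V sv] sv by simp
  have p3: "prob_space ?P3" using prob_PiM_lap[of V sv] sv by simp
  have p23: "prob_space (?P2 \<Otimes>\<^sub>M ?P3)" using p2 p3 by (rule prob_space_pair)
  have m23: "(\<lambda>(x, y). (?T2 x, ?T3 y)) \<in> measurable (?P2 \<Otimes>\<^sub>M ?P3) (?X2 \<Otimes>\<^sub>M ?X3)"
    using m2 m3 by measurable
  have e1: "distr ?P1 ?X1 ?T1 = density ?B1 ?f1"
    using PiM_lap_shift[OF L, of "\<lambda>_. s" ca] by simp
  have e2: "distr ?P2 ?X2 ?T2 = density ?B2 ?f2"
    using PiM_lap_shift[OF V, of sv cb] by simp
  have e3: "distr ?P3 ?X3 ?T3 = density ?B3 ?f3"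
    using PiM_lap_shift[OF V, of sv cc] by simp
  have sf3: "sigma_finite_measure (distr ?P3 ?X3 ?T3)"
    using prob_space.prob_space_distr[OF p3 m3] prob_space_imp_sigma_finite by blast
  have sf23: "sigma_finite_measure (distr (?P2 \<Otimes>\<^sub>M ?P3) (?X2 \<Otimes>\<^sub>M ?X3) (\<lambda>(x, y). (?T2 x, ?T3 y)))"
    using prob_space.prob_space_distr[OF p23 m23] prob_space_imp_sigma_finite by blast
  have d23: "distr (?P2 \<Otimes>\<^sub>M ?P3) (?X2 \<Otimes>\<^sub>M ?X3) (\<lambda>(x, y). (?T2 x, ?T3 y))
           = distr ?P2 ?X2 ?T2 \<Otimes>\<^sub>M distr ?P3 ?X3 ?T3"
    by (rule pair_measure_distr[OF m2 m3 sf3, symmetric])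
  have d: "distr (?P1 \<Otimes>\<^sub>M (?P2 \<Otimes>\<^sub>M ?P3)) (?X1 \<Otimes>\<^sub>M (?X2 \<Otimes>\<^sub>M ?X3)) (\<lambda>(x, y). (?T1 x, (\<lambda>(x, y). (?T2 x, ?T3 y)) y))
           = distr ?P1 ?X1 ?T1 \<Otimes>\<^sub>M distr (?P2 \<Otimes>\<^sub>M ?P3) (?X2 \<Otimes>\<^sub>M ?X3) (\<lambda>(x, y). (?T2 x, ?T3 y))"
    by (rule pair_measure_distr[OF m1 m23 sf23, symmetric])
  have Teq: "?T = (\<lambda>(x, y). (?T1 x, (\<lambda>(x, y). (?T2 x, ?T3 y)) y))"
    by (auto simp: fun_eq_iff split: prod.split)
  have sfB3: "sigma_finite_measure ?B3" by (rule sigma_finite_PiM_lborel[OF V])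
  have sfB2: "sigma_finite_measure ?B2" by (rule sigma_finite_PiM_lborel[OF V])
  have sfB23: "sigma_finite_measure (?B2 \<Otimes>\<^sub>M ?B3)" by (rule sigma_finite_pair_measure[OF sfB2 sfB3])
  have sfD3: "sigma_finite_measure (density ?B3 ?f3)" using sf3 e3 by simp
  have dd23: "density ?B2 ?f2 \<Otimes>\<^sub>M density ?B3 ?f3 = density (?B2 \<Otimes>\<^sub>M ?B3) (\<lambda>(x, y). ?f2 x * ?f3 y)"
    by (rule pair_measure_density[OF _ _ sfB3 sfD3]) measurable
  have sfD23: "sigma_finite_measure (density (?B2 \<Otimes>\<^sub>M ?B3) (\<lambda>(x, y). ?f2 x * ?f3 y))"
    using sf23 d23 e2 e3 dd23 by simp
  have dd: "density ?B1 ?f1 \<Otimes>\<^sub>M density (?B2 \<Otimes>\<^sub>M ?B3) (\<lambda>(x, y). ?f2 x * ?f3 y)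
          = density (?B1 \<Otimes>\<^sub>M (?B2 \<Otimes>\<^sub>M ?B3)) (\<lambda>(x, y). ?f1 x * (\<lambda>(x, y). ?f2 x * ?f3 y) y)"
    by (rule pair_measure_density[OF _ _ sfB23 sfD23]) measurable
  have Heq: "(\<lambda>(x, y). ?f1 x * (\<lambda>(x, y). ?f2 x * ?f3 y) y) = ?H"
    by (auto simp: fun_eq_iff split: prod.split)
  show ?thesis
    unfolding Teq d d23 e1 e2 e3 dd23 dd Heq ..
qed

lemma lap_shift_le:
  assumes s: "0 < s"
  shows "lap_density s (a - c) \<le> exp (\<bar>c - c'\<bar> / s) * lap_density s (a - c')"
proof -
  have "\<bar>a - c'\<bar> \<le> \<bar>a - c\<bar> + \<bar>c - c'\<bar>" by simp
  then have "\<bar>a - c'\<bar> / s \<le> (\<bar>a - c\<bar> + \<bar>c - c'\<bar>) / s" using s by (simp add: divide_right_mono)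
  then have "- \<bar>a - c\<bar> / s \<le> \<bar>c - c'\<bar> / s + - \<bar>a - c'\<bar> / s" by (simp add: add_divide_distrib)
  then have "exp (- \<bar>a - c\<bar> / s) \<le> exp (\<bar>c - c'\<bar> / s) * exp (- \<bar>a - c'\<bar> / s)"
    by (simp add: exp_add[symmetric])
  then have "exp (- \<bar>a - c\<bar> / s) / (2 * s) \<le> (exp (\<bar>c - c'\<bar> / s) * exp (- \<bar>a - c'\<bar> / s)) / (2 * s)"
    by (rule divide_right_mono) (use s in auto)
  then show ?thesis unfolding lap_density_def by simp
qed

lemma prod_lap_le:
  assumes I: "finite I" and s: "\<And>i. i \<in> I \<Longrightarrow> 0 < s i"
  shows "(\<Prod>i\<in>I. lap_density (s i) (x i - c i))
         \<le> exp (\<Sum>i\<in>I. \<bar>c i - c' i\<bar> / s i) * (\<Prod>i\<in>I. lap_density (s i) (x i - c' i))"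
proof -
  have "(\<Prod>i\<in>I. lap_density (s i) (x i - c i)) \<le> (\<Prod>i\<in>I. exp (\<bar>c i - c' i\<bar> / s i) * lap_density (s i) (x i - c' i))"
    by (rule prod_mono) (use s lap_density_nonneg lap_shift_le in auto)
  also have "\<dots> = exp (\<Sum>i\<in>I. \<bar>c i - c' i\<bar> / s i) * (\<Prod>i\<in>I. lap_density (s i) (x i - c' i))"
    using I by (simp add: exp_sum prod.distrib)
  finally show ?thesis .
qed

lemma line_diff:
  fixes g g' :: "'a \<Rightarrow> real" and alpha eps :: real
  assumes L: "finite L" and l0: "l0 \<in> L" and eq: "\<And>l. l \<in> L - {l0} \<Longrightarrow> g l = g' l"
    and d: "\<bar>g l0 - g' l0\<bar> \<le> alpha" and a: "0 < alpha" and e: "0 < eps"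
  shows "(\<Sum>l\<in>L. \<bar>g l - g' l\<bar> / (3 * alpha / eps)) \<le> eps / 3"
proof -
  have "(\<Sum>l\<in>L. \<bar>g l - g' l\<bar> / (3 * alpha / eps)) = \<bar>g l0 - g' l0\<bar> / (3 * alpha / eps) + (\<Sum>l\<in>L - {l0}. \<bar>g l - g' l\<bar> / (3 * alpha / eps))"
    by (rule sum.remove[OF L l0])
  also have "(\<Sum>l\<in>L - {l0}. \<bar>g l - g' l\<bar> / (3 * alpha / eps)) = 0"
    using eq by simp
  also have "\<bar>g l0 - g' l0\<bar> / (3 * alpha / eps) = \<bar>g l0 - g' l0\<bar> * eps / (3 * alpha)" by simp
  also have "\<dots> \<le> alpha * eps / (3 * alpha)"
    using d a e by (intro divide_right_mono mult_right_mono) auto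
  also have "\<dots> = eps / 3" using a by simp
  finally show ?thesis by simp
qed

lemma mean_diff:
  fixes g g' :: "'a \<times> 'a \<Rightarrow> real" and alpha eps :: real
  assumes L: "finite (lines N)" and l0: "l0 \<in> lines N" and eq: "\<And>l. l \<in> lines N - {l0} \<Longrightarrow> g l = g' l"
    and d: "\<bar>g l0 - g' l0\<bar> \<le> alpha" and a: "0 < alpha" and e: "0 < eps"
  shows "(\<Sum>v\<in>VL N. \<bar>lvmean N g v - lvmean N g' v\<bar> / (3 * alpha / (real (nv N v) * eps))) \<le> eps / 3"
proof -
  define v0 where "v0 = vlevel N l0"
  have V: "finite (VL N)" using L by (simp add: VL_def)
  have v0: "v0 \<in> VL N" using l0 by (simp add: VL_def v0_def)
  have finE: "finite (Ev N v)" for v using L by (simp add: Ev_def)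
  have l0E: "l0 \<in> Ev N v0" using l0 by (simp add: Ev_def v0_def)
  have npos: "0 < real (nv N v0)" using finE[of v0] l0E by (auto simp: nv_def card_gt_0_iff)
  have other: "lvmean N g v = lvmean N g' v" if "v \<noteq> v0" for v
  proof -
    have "\<And>l. l \<in> Ev N v \<Longrightarrow> g l = g' l" using eq that by (auto simp: Ev_def v0_def)
    then show ?thesis unfolding lvmean_def by simp
  qed
  have "(\<Sum>l\<in>Ev N v0. g l) = g l0 + (\<Sum>l\<in>Ev N v0 - {l0}. g l)" by (rule sum.remove[OF finE l0E])
  moreover have "(\<Sum>l\<in>Ev N v0. g' l) = g' l0 + (\<Sum>l\<in>Ev N v0 - {l0}. g' l)" by (rule sum.remove[OF finE l0E])
  moreover have "(\<Sum>l\<in>Ev N v0 - {l0}. g l) = (\<Sum>l\<in>Ev N v0 - {l0}. g' l)"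
    using eq by (intro sum.cong) (auto simp: Ev_def)
  ultimately have dm: "lvmean N g v0 - lvmean N g' v0 = (g l0 - g' l0) / real (nv N v0)"
    unfolding lvmean_def by (simp add: diff_divide_distrib[symmetric])
  have "(\<Sum>v\<in>VL N. \<bar>lvmean N g v - lvmean N g' v\<bar> / (3 * alpha / (real (nv N v) * eps)))
      = \<bar>lvmean N g v0 - lvmean N g' v0\<bar> / (3 * alpha / (real (nv N v0) * eps))
        + (\<Sum>v\<in>VL N - {v0}. \<bar>lvmean N g v - lvmean N g' v\<bar> / (3 * alpha / (real (nv N v) * eps)))"
    by (rule sum.remove[OF V v0])
  also have "(\<Sum>v\<in>VL N - {v0}. \<bar>lvmean N g v - lvmean N g' v\<bar> / (3 * alpha / (real (nv N v) * eps))) = 0"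
    using other by simp
  also have "\<bar>lvmean N g v0 - lvmean N g' v0\<bar> / (3 * alpha / (real (nv N v0) * eps)) = \<bar>g l0 - g' l0\<bar> * eps / (3 * alpha)"
    using npos a e by (simp add: dm abs_divide)
  also have "\<dots> \<le> alpha * eps / (3 * alpha)"
    using d a e by (intro divide_right_mono mult_right_mono) auto
  also have "\<dots> = eps / 3" using a by simp
  finally show ?thesis by simp
qed

theorem theorem4:
  fixes N :: "('bus, 'v) pnet" and Ostar alpha eps beta lam :: real
    and sel :: "('bus \<times> 'bus \<Rightarrow> real) \<times> ('v \<Rightarrow> real) \<times> ('v \<Rightarrow> real) \<Rightarrow> ('bus \<times> 'bus \<Rightarrow> complex)"
    and Mout :: "('bus \<times> 'bus \<Rightarrow> complex) measure"
  assumes "finite (buses N)" and "finite (lines N)" and "lines N \<subseteq> buses N \<times> buses N"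
    and "slack N \<in> buses N" and "Ostar > 0"
    and "alpha > 0" and "eps > 0" and "beta > 0" and "lam > 0"
    and "valid_selector N Ostar beta lam sel"
    and "sel \<in> plo_input_space N \<rightarrow>\<^sub>M Mout"
  shows "differentially_private
           (\<lambda>(g, b). plo_mech N Ostar alpha eps beta lam sel Mout g b) (alpha_adj N alpha) eps"
proof -
  note L = assms(2) and a = assms(6) and e = assms(7) and selm = assms(11)
  define s where "s = 3 * alpha / eps"
  define sv where "sv = (\<lambda>v. 3 * alpha / (real (nv N v) * eps))"
  have V: "finite (VL N)" using L by (simp add: VL_def)
  have spos: "0 < s" using a e by (simp add: s_def)
  have svpos: "0 < sv v" if vV: "v \<in> VL N" for v
  proof -
    obtain l where l: "l \<in> lines N" "v = vlevel N l" using vV by (auto simp: VL_def)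
    have "l \<in> Ev N v" using l by (simp add: Ev_def)
    moreover have "finite (Ev N v)" using L by (simp add: Ev_def)
    ultimately have "0 < nv N v" by (auto simp: nv_def card_gt_0_iff)
    then show ?thesis using a e by (simp add: sv_def)
  qed
  define B where "B = PiM (lines N) (\<lambda>_. lborel :: real measure) \<Otimes>\<^sub>M (PiM (VL N) (\<lambda>_. lborel :: real measure) \<Otimes>\<^sub>M PiM (VL N) (\<lambda>_. lborel :: real measure))"
  define H where "H g b = (\<lambda>(x, y, w). (\<Prod>l\<in>lines N. ennreal (lap_density s (x l - g l))) *
              ((\<Prod>v\<in>VL N. ennreal (lap_density (sv v) (y v - lvmean N g v))) *
               (\<Prod>v\<in>VL N. ennreal (lap_density (sv v) (w v - lvmean N b v)))))" for g b
  define T where "T g b = (\<lambda>(z, wg, wb). (restrict (\<lambda>l. g l + z l) (lines N),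
                            restrict (\<lambda>v. lvmean N g v + wg v) (VL N),
                            restrict (\<lambda>v. lvmean N b v + wb v) (VL N)))" for g b
  have sB: "sets B = sets (plo_input_space N)"
    unfolding B_def plo_input_space_def by (intro sets_pair_measure_cong sets_PiM_cong) simp_all
  have Q: "distr (plo_noise N alpha eps) (plo_input_space N) (T g b) = density B (H g b)" for g b
    using noise_shift[OF L V spos svpos, where ca=g and cb="lvmean N g" and cc="lvmean N b"]
    by (simp add: plo_noise_def plo_input_space_def T_def H_def B_def s_def sv_def)
  have Tm: "T g b \<in> measurable (plo_noise N alpha eps) (plo_input_space N)" for g b
  proof -
    have sN: "sets (plo_noise N alpha eps) = sets (plo_input_space N)"
      unfolding plo_noise_def plo_input_space_def by (intro sets_pair_measure_cong sets_PiM_cong) simp_all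
    show ?thesis
      unfolding measurable_cong_sets[OF sN refl] T_def plo_input_space_def by measurable
  qed
  have noise_prob: "prob_space (plo_noise N alpha eps)"
    unfolding plo_noise_def
    using prob_PiM_lap[of "lines N" "\<lambda>_. 3 * alpha / eps"] prob_PiM_lap[of "VL N" sv] spos svpos
    by (intro prob_space_pair) (auto simp: s_def sv_def)
  have probQ: "prob_space (density B (H g b))" for g b
    using prob_space.prob_space_distr[OF noise_prob Tm[of g b]] Q[of g b] by simp
  have selB: "sel \<in> measurable (density B (H g b)) Mout" for g b
    using selm by (simp add: measurable_cong_sets[OF sB refl])
  have mech: "plo_mech N Ostar alpha eps beta lam sel Mout g b = distr (density B (H g b)) Mout sel" for g b
  proof -
    have "distr (density B (H g b)) Mout sel = distr (plo_noise N alpha eps) Mout (sel \<circ> T g b)"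
      unfolding Q[symmetric] by (rule distr_distr[OF selm Tm])
    also have "sel \<circ> T g b = (\<lambda>(z, wg, wb). sel (restrict (\<lambda>l. g l + z l) (lines N),
                            restrict (\<lambda>v. lvmean N g v + wg v) (VL N),
                            restrict (\<lambda>v. lvmean N b v + wb v) (VL N)))"
      by (auto simp: fun_eq_iff T_def)
    finally show ?thesis unfolding plo_mech_def by simp
  qed
  have Hle: "H g b p \<le> ennreal (exp eps) * H g' b' p"
    if adj: "alpha_adj N alpha (g, b) (g', b')" for g b g' b' p
  proof -
    obtain l0 where l0: "l0 \<in> lines N" and dg: "\<bar>g l0 - g' l0\<bar> \<le> alpha" and db: "\<bar>b l0 - b' l0\<bar> \<le> alpha"
      and eqo: "\<And>l. l \<in> lines N - {l0} \<Longrightarrow> g l = g' l \<and> b l = b' l"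
      using adj unfolding alpha_adj_def by auto
    have eg: "\<And>l. l \<in> lines N - {l0} \<Longrightarrow> g l = g' l" using eqo by blast
    have eb: "\<And>l. l \<in> lines N - {l0} \<Longrightarrow> b l = b' l" using eqo by blast
    obtain x y w where p: "p = (x, y, w)" by (cases p) auto
    define P1 where "P1 c = (\<Prod>l\<in>lines N. lap_density s (x l - c l))" for c
    define P2 where "P2 c = (\<Prod>v\<in>VL N. lap_density (sv v) (y v - c v))" for c
    define P3 where "P3 c = (\<Prod>v\<in>VL N. lap_density (sv v) (w v - c v))" for c
    have n1: "0 \<le> P1 c" for c unfolding P1_def by (intro prod_nonneg) (use spos lap_density_nonneg in auto)
    have n2: "0 \<le> P2 c" for c unfolding P2_def by (intro prod_nonneg) (use svpos lap_density_nonneg in auto)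
    have n3: "0 \<le> P3 c" for c unfolding P3_def by (intro prod_nonneg) (use svpos lap_density_nonneg in auto)
    have Hp: "H g b p = ennreal (P1 g * (P2 (lvmean N g) * P3 (lvmean N b)))" for g b
    proof -
      have "(\<Prod>l\<in>lines N. ennreal (lap_density s (x l - g l))) = ennreal (P1 g)"
        unfolding P1_def by (rule prod_ennreal) (use spos lap_density_nonneg in auto)
      moreover have "(\<Prod>v\<in>VL N. ennreal (lap_density (sv v) (y v - lvmean N g v))) = ennreal (P2 (lvmean N g))"
        unfolding P2_def by (rule prod_ennreal) (use svpos lap_density_nonneg in auto)
      moreover have "(\<Prod>v\<in>VL N. ennreal (lap_density (sv v) (w v - lvmean N b v))) = ennreal (P3 (lvmean N b))"
        unfolding P3_def by (rule prod_ennreal) (use svpos lap_density_nonneg in auto)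
      ultimately show ?thesis unfolding H_def p using n1 n2 n3
        by (simp add: ennreal_mult[symmetric])
    qed
    have r1: "P1 g \<le> exp (eps / 3) * P1 g'"
    proof -
      have "P1 g \<le> exp (\<Sum>l\<in>lines N. \<bar>g l - g' l\<bar> / s) * P1 g'"
        unfolding P1_def using prod_lap_le[OF L, of "\<lambda>_. s"] spos by simp
      also have "\<dots> \<le> exp (eps / 3) * P1 g'"
        using line_diff[where g=g and g'=g', OF L l0 eg dg a e] n1 unfolding s_def by (intro mult_right_mono) auto
      finally show ?thesis .
    qed
    have r2: "P2 (lvmean N g) \<le> exp (eps / 3) * P2 (lvmean N g')"
    proof -
      have "P2 (lvmean N g) \<le> exp (\<Sum>v\<in>VL N. \<bar>lvmean N g v - lvmean N g' v\<bar> / sv v) * P2 (lvmean N g')"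
        unfolding P2_def using prod_lap_le[OF V, of sv] svpos by simp
      also have "\<dots> \<le> exp (eps / 3) * P2 (lvmean N g')"
        using mean_diff[where g=g and g'=g', OF L l0 eg dg a e] n2 unfolding sv_def by (intro mult_right_mono) auto
      finally show ?thesis .
    qed
    have r3: "P3 (lvmean N b) \<le> exp (eps / 3) * P3 (lvmean N b')"
    proof -
      have "P3 (lvmean N b) \<le> exp (\<Sum>v\<in>VL N. \<bar>lvmean N b v - lvmean N b' v\<bar> / sv v) * P3 (lvmean N b')"
        unfolding P3_def using prod_lap_le[OF V, of sv] svpos by simp
      also have "\<dots> \<le> exp (eps / 3) * P3 (lvmean N b')"
        using mean_diff[where g=b and g'=b', OF L l0 eb db a e] n3 unfolding sv_def by (intro mult_right_mono) auto
      finally show ?thesis .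
    qed
    have "P1 g * (P2 (lvmean N g) * P3 (lvmean N b))
        \<le> (exp (eps / 3) * P1 g') * ((exp (eps / 3) * P2 (lvmean N g')) * (exp (eps / 3) * P3 (lvmean N b')))"
      using r1 r2 r3 n1 n2 n3 by (intro mult_mono) auto
    also have "\<dots> = (exp (eps / 3) * exp (eps / 3) * exp (eps / 3)) * (P1 g' * (P2 (lvmean N g') * P3 (lvmean N b')))"
      by (simp add: ac_simps)
    also have "exp (eps / 3) * exp (eps / 3) * exp (eps / 3) = exp eps"
      by (simp add: exp_add[symmetric])
    finally have "P1 g * (P2 (lvmean N g) * P3 (lvmean N b)) \<le> exp eps * (P1 g' * (P2 (lvmean N g') * P3 (lvmean N b')))" .
    then have "ennreal (P1 g * (P2 (lvmean N g) * P3 (lvmean N b))) \<le> ennreal (exp eps * (P1 g' * (P2 (lvmean N g') * P3 (lvmean N b'))))"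
      by (rule ennreal_leI)
    then show ?thesis unfolding Hp using n1 n2 n3 by (simp add: ennreal_mult)
  qed
  show ?thesis
    unfolding differentially_private_def
  proof (intro allI impI)
    fix D D' :: "('bus \<times> 'bus \<Rightarrow> real) \<times> ('bus \<times> 'bus \<Rightarrow> real)" and A
    assume adj: "alpha_adj N alpha D D'"
      and A: "A \<in> sets ((\<lambda>(g, b). plo_mech N Ostar alpha eps beta lam sel Mout g b) D)"
    obtain g b where D: "D = (g, b)" by fastforce
    obtain g' b' where D': "D' = (g', b')" by fastforce
    have AM: "A \<in> sets Mout" using A by (simp add: D mech)
    define C where "C = sel -` A \<inter> space B"
    have CB: "C \<in> sets B"
      unfolding C_def using measurable_sets[OF selB[of g b] AM] by simp
    have m1: "measure (plo_mech N Ostar alpha eps beta lam sel Mout g b) A = measure (density B (H g b)) C"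
      unfolding mech C_def by (subst measure_distr[OF selB AM]) simp
    have m2: "measure (plo_mech N Ostar alpha eps beta lam sel Mout g' b') A = measure (density B (H g' b')) C"
      unfolding mech C_def by (subst measure_distr[OF selB AM]) simp
    have Hm[measurable]: "H g b \<in> borel_measurable B" for g b
      unfolding H_def B_def by measurable
    have "emeasure (density B (H g b)) C = (\<integral>\<^sup>+p. H g b p * indicator C p \<partial>B)"
      using CB by (simp add: emeasure_density)
    also have "\<dots> \<le> (\<integral>\<^sup>+p. ennreal (exp eps) * (H g' b' p * indicator C p) \<partial>B)"
      using Hle[OF adj[unfolded D D']]
      by (intro nn_integral_mono) (auto simp: mult.assoc[symmetric] intro!: mult_right_mono)
    also have "\<dots> = ennreal (exp eps) * (\<integral>\<^sup>+p. H g' b' p * indicator C p \<partial>B)"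
      using CB by (intro nn_integral_cmult) simp
    also have "\<dots> = ennreal (exp eps) * emeasure (density B (H g' b')) C"
      using CB by (simp add: emeasure_density)
    finally have le: "emeasure (density B (H g b)) C \<le> ennreal (exp eps) * emeasure (density B (H g' b')) C" .
    have fin: "emeasure (density B (H g' b')) C \<noteq> \<top>"
      using finite_measure.emeasure_finite[OF prob_space.finite_measure[OF probQ]] by blast
    have "measure (density B (H g b)) C = enn2real (emeasure (density B (H g b)) C)"
      by (simp add: measure_def)
    also have "\<dots> \<le> enn2real (ennreal (exp eps) * emeasure (density B (H g' b')) C)"
    proof (rule enn2real_mono[OF le])
      have "emeasure (density B (H g' b')) C < \<top>" using fin by (simp add: less_top[symmetric])
      then show "ennreal (exp eps) * emeasure (density B (H g' b')) C < \<top>"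
        unfolding ennreal_mult_less_top by simp
    qed
    also have "\<dots> = exp eps * measure (density B (H g' b')) C"
      by (simp add: enn2real_mult measure_def)
    finally show "measure ((\<lambda>(g, b). plo_mech N Ostar alpha eps beta lam sel Mout g b) D) A
        \<le> exp eps * measure ((\<lambda>(g, b). plo_mech N Ostar alpha eps beta lam sel Mout g b) D') A"
      using m1 m2 by (simp add: D D')
  qed
qed

end
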